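(* Let $A\in\mathbb{R}^{m\times n}$ with $\operatorname{rank}(A)=m$, $b\in\mathbb{R}^m$, and suppose $\mathcal{F}=\{x\in\mathbb{R}^n: Ax=b,\ x\ge 0\}$ is nonempty with no strictly positive point. Let $y\in\mathbb{R}^m$ satisfy $0\ne z:=A^Ty\ge 0$ and $\langle b,y\rangle=0$, and let $V\in\mathbb{R}^{n\times(n-s_z)}$ be the matrix whose columns are the unit vectors $e_i$ for the indices $i$ with $z_i=0$ (in increasing order), where $s_z=|\{i:z_i>0\}|$. Let $\mathcal{I}_0=\{i\in\{1,\dots,n\}: x_i=0 \text{ for all } x\in\mathcal{F}\}$. Then for every basic feasible solution $\bar x$ of $\mathcal{F}$ with basis $\mathcal{B}$: (1) the degree of degeneracy of $\bar x$ is at least $m-\operatorname{rank}(AV)$; (2) at least $m-\operatorname{rank}(AV)$ of the basic indices in $\mathcal{B}$ belong to $\mathcal{I}_0$.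
   Context: Given $\mathcal{B}\subset\{1,\dots,n\}$ with $|\mathcal{B}|=m$, a point $x\in\mathcal{F}$ is a basic feasible solution (with basis $\mathcal{B}$) if $A(:,\mathcal{B})$ (columns of $A$ indexed by $\mathcal{B}$) is nonsingular and $x_i=0$ for all $i\notin\mathcal{B}$. The degree of degeneracy of a basic feasible solution $\bar x$ with basis $\mathcal{B}$ is the number of indices $i\in\mathcal{B}$ with $\bar x_i=0$. Such a $y$ exists whenever strict feasibility fails, and $\mathcal{F}=\{Vv: AVv=b,\ v\ge 0\}$. *)

theory Defs
  imports "Jordan_Normal_Form.DL_Rank" "Jordan_Normal_Form.DL_Submatrix"
begin

(* Indices are 0-based: rows 0..<m, columns 0..<n. *)

definition feasible_set :: "real mat \<Rightarrow> real vec \<Rightarrow> real vec set" where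
  "feasible_set A b = {x \<in> carrier_vec (dim_col A). A *\<^sub>v x = b \<and> (\<forall>i<dim_col A. x $ i \<ge> 0)}"

definition mrank :: "real mat \<Rightarrow> nat" where
  "mrank M = vec_space.rank (dim_row M) M"

definition is_bfs :: "real mat \<Rightarrow> real vec \<Rightarrow> real vec \<Rightarrow> nat set \<Rightarrow> bool" where
  "is_bfs A b x B \<longleftrightarrow> B \<subseteq> {0..<dim_col A} \<and> card B = dim_row A \<and>
     det (submatrix A UNIV B) \<noteq> 0 \<and> x \<in> feasible_set A b \<and>
     (\<forall>i<dim_col A. i \<notin> B \<longrightarrow> x $ i = 0)"

definition degeneracy_degree :: "real vec \<Rightarrow> nat set \<Rightarrow> nat" where
  "degeneracy_degree x B = card {i \<in> B. x $ i = 0}"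

definition implicit_zeros :: "real mat \<Rightarrow> real vec \<Rightarrow> nat set" where
  "implicit_zeros A b = {i. i < dim_col A \<and> (\<forall>x \<in> feasible_set A b. x $ i = 0)}"

definition Vmat :: "nat \<Rightarrow> real vec \<Rightarrow> real mat" where
  "Vmat n z = (let Z = sorted_list_of_set {i. i < n \<and> z $ i = 0} in
     mat n (n - card {i. i < n \<and> z $ i > 0}) (\<lambda>(i, j). if i = Z ! j then 1 else 0))"

end

theory Submission
  imports Defs
begin

lemma colAV:
  fixes A :: "real mat"
  assumes A: "A \<in> carrier_mat m n" and z: "\<forall>i<n. z $ i \<ge> 0"
    and i: "i < n" and zi: "z $ i = 0"
  shows "col A i \<in> set (cols (A * Vmat n z))"
proof -
  define Z where "Z = sorted_list_of_set {i. i < n \<and> z $ i = 0}"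
  have fin: "finite {i. i < n \<and> z $ i = 0}" by simp
  have setZ: "set Z = {i. i < n \<and> z $ i = 0}" unfolding Z_def using fin by simp
  have lenZ: "length Z = card {i. i < n \<and> z $ i = 0}" unfolding Z_def by simp
  have part: "{0..<n} = {i. i < n \<and> z $ i = 0} \<union> {i. i < n \<and> z $ i > 0}"
    using z by force
  have "card {0..<n} = card {i. i < n \<and> z $ i = 0} + card {i. i < n \<and> z $ i > 0}"
    unfolding part by (rule card_Un_disjoint) auto
  hence lenZ2: "length Z = n - card {i. i < n \<and> z $ i > 0}" using lenZ by simp
  obtain j where j: "j < length Z" "Z ! j = i" using setZ i zi by (metis (mono_tags, lifting) in_set_conv_nth mem_Collect_eq)
  have dZ: "distinct Z" unfolding Z_def by simp
  have V: "Vmat n z \<in> carrier_mat n (length Z)"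
    unfolding Vmat_def Let_def Z_def[symmetric] lenZ2 by simp
  have "col (A * Vmat n z) j = col A i"
  proof (rule eq_vecI)
    fix r assume r: "r < dim_vec (col A i)"
    hence rm: "r < m" using A by simp
    have "col (A * Vmat n z) j $ r = (A * Vmat n z) $$ (r, j)"
      using A V j rm by simp
    also have "\<dots> = (\<Sum>k = 0..<n. A $$ (r, k) * (if k = i then 1 else 0))"
      using A V j rm i unfolding Vmat_def Let_def Z_def[symmetric] lenZ2[symmetric]
      by (simp add: scalar_prod_def)
    also have "\<dots> = A $$ (r, i)" using i by (simp add: if_distrib cong: if_cong)
    also have "\<dots> = col A i $ r" using A rm i by simp
    finally show "col (A * Vmat n z) j $ r = col A i $ r" .
  qed (use A V j in simp)
  moreover have "j < length (cols (A * Vmat n z))" using A V j by simp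
  ultimately show ?thesis by (metis cols_nth nth_mem cols_length)
qed

theorem mainTheorem7:
  fixes A :: "real mat" and b y z :: "real vec" and m n :: nat
  assumes A: "A \<in> carrier_mat m n"
    and rankA: "mrank A = m"
    and b: "b \<in> carrier_vec m"
    and nonempty: "feasible_set A b \<noteq> {}"
    and no_strict: "\<not> (\<exists>x \<in> feasible_set A b. \<forall>i<n. x $ i > 0)"
    and y: "y \<in> carrier_vec m"
    and z_def: "z = transpose_mat A *\<^sub>v y"
    and z_nz: "z \<noteq> 0\<^sub>v n"
    and z_nonneg: "\<forall>i<n. z $ i \<ge> 0"
    and by0: "b \<bullet> y = 0"
  shows "\<forall>x B. is_bfs A b x B \<longrightarrow>
           m - mrank (A * Vmat n z) \<le> degeneracy_degree x B \<and>
           m - mrank (A * Vmat n z) \<le> card (B \<inter> implicit_zeros A b)"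
proof (intro allI impI)
  fix x B assume bfs: "is_bfs A b x B"
  have Bsub: "B \<subseteq> {0..<n}" and cardB: "card B = m"
    and detC: "det (submatrix A UNIV B) \<noteq> 0" and xF: "x \<in> feasible_set A b"
    using bfs A unfolding is_bfs_def by auto
  have finB: "finite B" using Bsub finite_subset by blast
  define P where "P = {i. i < n \<and> z $ i > 0}"
  have PI: "P \<subseteq> implicit_zeros A b"
  proof
    fix i assume iP: "i \<in> P"
    show "i \<in> implicit_zeros A b"
      unfolding implicit_zeros_def
    proof (intro CollectI conjI ballI)
      show "i < dim_col A" using iP A P_def by simp
      fix w assume w: "w \<in> feasible_set A b"
      have wc: "w \<in> carrier_vec n" and Aw: "A *\<^sub>v w = b" and wnn: "\<forall>k<n. w $ k \<ge> 0"
        using w A unfolding feasible_set_def by auto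
      have "z \<bullet> w = y \<bullet> (A *\<^sub>v w)" unfolding z_def using transpose_vec_mult_scalar[OF A wc y] .
      also have "\<dots> = 0" using Aw by0 b y by (simp add: comm_scalar_prod)
      finally have "(\<Sum>k\<in>{0..<n}. z $ k * w $ k) = 0" using wc by (simp add: scalar_prod_def)
      moreover have "\<forall>k\<in>{0..<n}. z $ k * w $ k \<ge> 0" using wnn z_nonneg by simp
      ultimately have "\<forall>k\<in>{0..<n}. z $ k * w $ k = 0" using sum_nonneg_eq_0_iff[of "{0..<n}" "\<lambda>k. z $ k * w $ k"] by auto
      hence "z $ i * w $ i = 0" using iP P_def by force
      thus "w $ i = 0" using iP P_def by simp
    qed
  qed
  define C where "C = submatrix A UNIV B"
  have cardB': "card {j. j < dim_col A \<and> j \<in> B} = m"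
  proof -
    have "{j. j < dim_col A \<and> j \<in> B} = B" using Bsub A by auto
    thus ?thesis using cardB by simp
  qed
  have C: "C \<in> carrier_mat m m" unfolding C_def carrier_mat_def using A cardB' by (simp add: dim_submatrix)
  have rC: "vec_space.rank m C = m" using vec_space.low_rank_det_zero[OF C] detC C_def by simp
  have distC: "distinct (cols C)"
  proof (rule ccontr)
    assume "\<not> distinct (cols C)"
    hence "vec_space.rank m C < m" using vec_space.non_distinct_low_rank[OF C] by simp
    thus False using rC by simp
  qed
  have li: "\<not> module.lin_dep class_ring (module_vec TYPE(real) m) (set (cols C))"
    using vec_space.full_rank_lin_indpt[OF C rC distC] .
  have cardC: "card (set (cols C)) = m" using distC C by (simp add: distinct_card)
  have colsC: "set (cols C) \<subseteq> (\<lambda>j. col A j) ` B"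
  proof
    fix v assume "v \<in> set (cols C)"
    then obtain k where k: "k < m" "v = col C k" using C by (metis cols_length cols_nth in_set_conv_nth carrier_matD(2))
    have pk: "pick B k \<in> B" using pick_in_set k cardB by simp
    have "col C k = col A (pick B k)"
    proof (rule eq_vecI)
      fix r assume "r < dim_vec (col A (pick B k))"
      hence r: "r < m" using A by simp
      have r': "r < card {i. i < dim_row A \<and> i \<in> UNIV}" using A r by simp
      have k': "k < card {j. j < dim_col A \<and> j \<in> B}" using cardB' k by simp
      show "col C k $ r = col A (pick B k) $ r"
        using submatrix_index[OF r' k'] C k r A pk Bsub unfolding C_def pick_UNIV by auto
    qed (use C A in simp)
    thus "v \<in> (\<lambda>j. col A j) ` B" using k pk by auto
  qed
  define U1 where "U1 = set (cols C) \<inter> (\<lambda>j. col A j) ` (B - P)"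
  define U2 where "U2 = set (cols C) \<inter> (\<lambda>j. col A j) ` (B \<inter> P)"
  have "set (cols C) = U1 \<union> U2" using colsC unfolding U1_def U2_def by blast
  hence "m \<le> card U1 + card U2" using cardC card_Un_le by metis
  moreover have "card U2 \<le> card (B \<inter> P)"
    unfolding U2_def by (meson Int_lower2 card_image_le card_mono finB finite_Int finite_imageI order_trans)
  moreover have "card U1 \<le> mrank (A * Vmat n z)"
  proof -
    have AV: "A * Vmat n z \<in> carrier_mat m (dim_col (Vmat n z))"
      using A unfolding Vmat_def Let_def by simp
    have "U1 \<subseteq> set (cols (A * Vmat n z))"
    proof
      fix v assume "v \<in> U1"
      then obtain i where i: "i \<in> B" "i \<notin> P" "v = col A i" unfolding U1_def by auto
      have "i < n" using i Bsub by auto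
      moreover have "z $ i = 0" using i z_nonneg \<open>i < n\<close> P_def by force
      ultimately show "v \<in> set (cols (A * Vmat n z))" using colAV[OF A z_nonneg] i by simp
    qed
    moreover have "\<not> module.lin_dep class_ring (module_vec TYPE(real) m) U1"
      using module.subset_li_is_li[OF vec_module li] U1_def by blast
    ultimately have "card U1 \<le> vec_space.rank m (A * Vmat n z)"
      using vec_space.rank_ge_card_indpt[OF AV] by blast
    thus ?thesis unfolding mrank_def using AV A by simp
  qed
  ultimately have main: "m - mrank (A * Vmat n z) \<le> card (B \<inter> P)" by linarith
  have "card (B \<inter> P) \<le> card (B \<inter> implicit_zeros A b)"
    using PI finB by (intro card_mono) auto
  moreover have "card (B \<inter> implicit_zeros A b) \<le> degeneracy_degree x B"
    unfolding degeneracy_degree_def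
    using finB xF by (intro card_mono) (auto simp: implicit_zeros_def)
  ultimately show "m - mrank (A * Vmat n z) \<le> degeneracy_degree x B \<and>
           m - mrank (A * Vmat n z) \<le> card (B \<inter> implicit_zeros A b)" using main by linarith
qed

end
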